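(* Let $x,y$ be elements both lying in $A$ or both lying in $B$, with $x,y\notin H$, and suppose $x=c^{\alpha}d^{\beta}yc^{\gamma}d^{\delta}$ for some integers $\alpha,\beta,\gamma,\delta$. If $x,y\in A$, then the integers $\alpha+\gamma$, $\beta$ and $\delta$ are uniquely determined by this equality (i.e. any two such representations give the same values). If $x,y\in B$, then $\beta+\delta$, $\alpha$ and $\gamma$ are uniquely determined by this equality.
   Context: Fix integers $m,n>1$ and let $G_{mn}=\langle a,b;\ [a^m,b^n]=1\rangle$. Put $c=a^m$, $d=b^n$, $H=\langle c,d\rangle$ (free abelian with basis $c,d$), $A=\langle a,H\rangle$, $B=\langle b,H\rangle$. *)

theory Defs
  imports "HOL-Algebra.Algebra"
begin

text \<open>G with distinguished elements a, b is (a copy of) the group presented by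
  generators a, b and the single relator [a^m, b^n]: it is a group generated by a, b in which
  the relator holds, and it satisfies the universal property of the presentation.
  Targets K are taken with carrier in nat; this loses nothing, since any group generated by
  two elements is countable and hence isomorphic to a group with carrier a subset of nat.\<close>

definition commutator :: "('g, 'z) monoid_scheme \<Rightarrow> 'g \<Rightarrow> 'g \<Rightarrow> 'g" where
  "commutator G x y = inv\<^bsub>G\<^esub> x \<otimes>\<^bsub>G\<^esub> inv\<^bsub>G\<^esub> y \<otimes>\<^bsub>G\<^esub> x \<otimes>\<^bsub>G\<^esub> y"

definition presents_Gmn :: "'g monoid \<Rightarrow> 'g \<Rightarrow> 'g \<Rightarrow> nat \<Rightarrow> nat \<Rightarrow> bool" where
  "presents_Gmn G a b m n \<longleftrightarrow>
     group G \<and> a \<in> carrier G \<and> b \<in> carrier G \<and>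
     commutator G (a [^]\<^bsub>G\<^esub> m) (b [^]\<^bsub>G\<^esub> n) = \<one>\<^bsub>G\<^esub> \<and>
     carrier G = generate G {a, b} \<and>
     (\<forall>(K :: nat monoid) a' b'.
        group K \<and> a' \<in> carrier K \<and> b' \<in> carrier K \<and>
        commutator K (a' [^]\<^bsub>K\<^esub> m) (b' [^]\<^bsub>K\<^esub> n) = \<one>\<^bsub>K\<^esub>
        \<longrightarrow> (\<exists>h \<in> hom G K. h a = a' \<and> h b = b'))"

end

theory Submission
  imports Defs "HOL-Library.Countable_Set"
begin


type_synonym syl = "bool \<times> int"

fun okS :: "nat \<Rightarrow> syl \<Rightarrow> bool" where
  "okS m (t,e) = (if t then 0 < e \<and> e < int m else e \<noteq> 0)"

fun red :: "nat \<Rightarrow> syl list \<Rightarrow> bool" where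
  "red m [] = True"
| "red m [s] = okS m s"
| "red m (s # s' # u) = (okS m s \<and> fst s \<noteq> fst s' \<and> red m (s' # u))"

lemma red_Cons: "red m (s # v) \<longleftrightarrow> okS m s \<and> red m v \<and> (v = [] \<or> fst (hd v) \<noteq> fst s)"
  by (cases v) auto

fun leadA :: "syl list \<Rightarrow> int" where
  "leadA ((True,e)#t) = e" | "leadA v = 0"
fun restA :: "syl list \<Rightarrow> syl list" where
  "restA ((True,e)#t) = t" | "restA v = v"
fun leadB :: "syl list \<Rightarrow> int" where
  "leadB ((False,e)#t) = e" | "leadB v = 0"
fun restB :: "syl list \<Rightarrow> syl list" where
  "restB ((False,e)#t) = t" | "restB v = v"

definition mkA :: "int \<Rightarrow> syl list \<Rightarrow> syl list" where
  "mkA r u = (if r = 0 then u else (True,r)#u)"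
definition mkB :: "int \<Rightarrow> syl list \<Rightarrow> syl list" where
  "mkB r u = (if r = 0 then u else (False,r)#u)"

definition lmulA :: "nat \<Rightarrow> int \<Rightarrow> syl list \<Rightarrow> syl list" where
  "lmulA m i v = mkA ((leadA v + i) mod int m) (restA v)"
definition lmulB :: "int \<Rightarrow> syl list \<Rightarrow> syl list" where
  "lmulB j v = mkB (leadB v + j) (restB v)"

definition noT :: "syl list \<Rightarrow> bool" where "noT u \<longleftrightarrow> u = [] \<or> \<not> fst (hd u)"
definition noF :: "syl list \<Rightarrow> bool" where "noF u \<longleftrightarrow> u = [] \<or> fst (hd u)"

lemma red_restA: "red m v \<Longrightarrow> red m (restA v) \<and> noT (restA v)"
  by (cases v rule: restA.cases) (auto simp: red_Cons noT_def)
lemma red_restB: "red m v \<Longrightarrow> red m (restB v) \<and> noF (restB v)"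
  by (cases v rule: restB.cases) (auto simp: red_Cons noF_def)
lemma noT_A: "noT u \<Longrightarrow> leadA u = 0 \<and> restA u = u"
  by (cases u rule: restA.cases) (auto simp: noT_def)
lemma noF_B: "noF u \<Longrightarrow> leadB u = 0 \<and> restB u = u"
  by (cases u rule: restB.cases) (auto simp: noF_def)
lemma mkA_simps: "noT u \<Longrightarrow> leadA (mkA r u) = r \<and> restA (mkA r u) = u"
  by (auto simp: mkA_def noT_A)
lemma mkB_simps: "noF u \<Longrightarrow> leadB (mkB r u) = r \<and> restB (mkB r u) = u"
  by (auto simp: mkB_def noF_B)
lemma leadA_range: "red m v \<Longrightarrow> m > 0 \<Longrightarrow> 0 \<le> leadA v \<and> leadA v < int m"
  by (cases v rule: restA.cases) (auto simp: red_Cons)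
lemma leadB_nz: "red m v \<Longrightarrow> restB v \<noteq> v \<Longrightarrow> leadB v \<noteq> 0"
  by (cases v rule: restB.cases) (auto simp: red_Cons)
lemma restA_eq: "red m v \<Longrightarrow> mkA (leadA v) (restA v) = v"
  by (cases v rule: restA.cases) (auto simp: red_Cons mkA_def)
lemma restB_eq: "red m v \<Longrightarrow> mkB (leadB v) (restB v) = v"
  by (cases v rule: restB.cases) (auto simp: red_Cons mkB_def)

lemma red_mkA: "red m u \<Longrightarrow> noT u \<Longrightarrow> 0 \<le> r \<Longrightarrow> r < int m \<Longrightarrow> red m (mkA r u)"
  by (auto simp: mkA_def red_Cons noT_def)
lemma red_mkB: "red m u \<Longrightarrow> noF u \<Longrightarrow> red m (mkB r u)"
  by (auto simp: mkB_def red_Cons noF_def)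

lemma red_lmulA: assumes "red m v" "m > 1" shows "red m (lmulA m i v)"
  unfolding lmulA_def using assms red_restA[OF assms(1)]
  by (intro red_mkA) auto

lemma red_lmulB: assumes "red m v" shows "red m (lmulB j v)"
  unfolding lmulB_def using assms red_restB[OF assms(1)]
  by (intro red_mkB) auto

lemma lmulA_comp: assumes "red m v" "m > 1" shows "lmulA m i (lmulA m j v) = lmulA m (i+j) v"
  using red_restA[OF assms(1)]
  by (simp add: lmulA_def mkA_simps mod_simps add.commute add.left_commute)

lemma lmulB_comp: assumes "red m v" shows "lmulB i (lmulB j v) = lmulB (i+j) v"
  using red_restB[OF assms(1)]
  by (simp add: lmulB_def mkB_simps add.commute add.left_commute)

lemma lmulA_0: assumes "red m v" "m > 1" shows "lmulA m (int m * k) v = v"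
  using leadA_range[OF assms(1)] assms(2) restA_eq[OF assms(1)]
  by (simp add: lmulA_def)

lemma lmulB_0: assumes "red m v" shows "lmulB 0 v = v"
  using restB_eq[OF assms(1)] by (simp add: lmulB_def)

fun rmulB :: "int \<Rightarrow> syl list \<Rightarrow> syl list" where
  "rmulB r [] = (if r = 0 then [] else [(False,r)])"
| "rmulB r [(t,e)] = (if t then (if r = 0 then [(t,e)] else [(t,e),(False,r)])
                       else (if e + r = 0 then [] else [(False,e+r)]))"
| "rmulB r (s # s' # u) = s # rmulB r (s' # u)"

definition act :: "nat \<Rightarrow> syl \<Rightarrow> syl list \<Rightarrow> syl list" where
  "act m s = (if fst s then lmulA m (snd s) else lmulB (snd s))"

lemma act_cons: assumes "okS m s" "Lx = [] \<or> fst (hd Lx) \<noteq> fst s"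
  shows "act m s Lx = s # Lx"
proof -
  obtain t e where s: "s = (t,e)" by (cases s)
  show ?thesis
  proof (cases t)
    case True
    hence "noT Lx" using assms s by (auto simp: noT_def)
    thus ?thesis using True s assms by (simp add: act_def lmulA_def noT_A mkA_def)
  next
    case False
    hence "noF Lx" using assms s by (auto simp: noF_def)
    thus ?thesis using False s assms by (simp add: act_def lmulB_def noF_B mkB_def)
  qed
qed

lemma rmulB_Cons: "L \<noteq> [] \<Longrightarrow> rmulB r (s # L) = s # rmulB r L"
  by (cases L) auto

lemma rmulB_hd: "L \<noteq> [] \<Longrightarrow> rmulB r L = [] \<or> fst (hd (rmulB r L)) = fst (hd L)"
  by (induction r L rule: rmulB.induct) auto

lemma foldr_act_rmulB:
  assumes "red m w" "m > 1"
  shows "foldr (act m) w (rmulB r []) = rmulB r w"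
  using assms(1)
proof (induction w)
  case Nil thus ?case by simp
next
  case (Cons s L)
  hence IH: "foldr (act m) L (rmulB r []) = rmulB r L" and okS: "okS m s"
    by (auto simp: red_Cons)
  show ?case
  proof (cases "L = []")
    case True
    obtain t e where s: "s = (t,e)" by (cases s)
    show ?thesis using True s okS assms(2)
      by (cases t) (auto simp: act_def lmulA_def lmulB_def mkA_def mkB_def)
  next
    case False
    have "act m s (rmulB r L) = s # rmulB r L"
      using rmulB_hd[OF False, of r] Cons.prems False okS
      by (intro act_cons) (auto simp: red_Cons)
    thus ?thesis using IH False by (simp add: rmulB_Cons)
  qed
qed

definition hasT :: "syl list \<Rightarrow> bool" where "hasT L \<longleftrightarrow> (\<exists>e. (True,e) \<in> set L)"

lemma hasT_rmulB: "hasT L \<Longrightarrow> hasT (rmulB r L)"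
  unfolding hasT_def by (induction r L rule: rmulB.induct) auto

lemma last_lmulB: assumes "hasT L" shows "last (lmulB q L) = last L"
proof -
  obtain x t where L: "L = x # t" using assms by (cases L) (auto simp: hasT_def)
  obtain b e where x: "x = (b,e)" by (cases x)
  show ?thesis
  proof (cases b)
    case True thus ?thesis using L x by (simp add: lmulB_def mkB_def)
  next
    case False
    hence "t \<noteq> []" using assms L x by (auto simp: hasT_def)
    thus ?thesis using L x False by (simp add: lmulB_def mkB_def)
  qed
qed

lemma mkB_inj: "mkB x u = mkB y u \<Longrightarrow> x = y"
  unfolding mkB_def by (auto split: if_splits dest: arg_cong[where f=length])

lemma lmulB_inj: "lmulB x u = lmulB y u \<Longrightarrow> x = y"
  unfolding lmulB_def by (drule mkB_inj) simp

lemma last_rmulB_inj: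
  assumes "red m w" "hasT w" "last (rmulB r1 w) = last (rmulB r2 w)"
  shows "r1 = r2"
  using assms
proof (induction w)
  case Nil thus ?case by (simp add: hasT_def)
next
  case (Cons s L)
  show ?case
  proof (cases "L = []")
    case True
    then obtain e where "s = (True, e)" using Cons.prems by (auto simp: hasT_def)
    thus ?thesis using True Cons.prems by (auto split: if_splits)
  next
    case False
    note eqs = rmulB_Cons[OF False]
    show ?thesis
    proof (cases "hasT L")
      case True
      have ne: "rmulB r L \<noteq> []" for r using hasT_rmulB[OF True, of r] by (auto simp: hasT_def)
      show ?thesis using Cons.IH[OF _ True] Cons.prems ne eqs by (auto simp: red_Cons)
    next
      case hF: False
      then obtain e where s: "s = (True, e)" using Cons.prems by (auto simp: hasT_def)
      obtain s' L' where L: "L = s' # L'" using False by (cases L) auto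
      have "\<not> fst s'" using Cons.prems s L by (auto simp: red_Cons)
      then obtain j where s': "s' = (False, j)" by (cases s') auto
      have "L' = []"
      proof (rule ccontr)
        assume "L' \<noteq> []"
        then obtain s'' L'' where "L' = s'' # L''" by (cases L') auto
        thus False using Cons.prems s L s' hF by (cases s'') (auto simp: red_Cons hasT_def)
      qed
      thus ?thesis using Cons.prems s L s' by (auto split: if_splits)
    qed
  qed
qed

lemma final_words:
  assumes "red m w" "hasT w" "lmulB q1 (rmulB r1 w) = lmulB q2 (rmulB r2 w)"
  shows "q1 = q2 \<and> r1 = r2"
proof -
  have "last (rmulB r1 w) = last (rmulB r2 w)"
    using last_lmulB[OF hasT_rmulB[OF assms(2)]] assms(3) by metis
  hence r: "r1 = r2" using last_rmulB_inj assms by blast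
  thus ?thesis using assms(3) lmulB_inj by blast
qed



definition evl :: "('a, 'z) monoid_scheme \<Rightarrow> (bool \<times> 'a) list \<Rightarrow> 'a \<Rightarrow> 'a" where
  "evl K l z = foldr (\<lambda>p acc. (if fst p then snd p else inv\<^bsub>K\<^esub> (snd p)) \<otimes>\<^bsub>K\<^esub> acc) l z"

lemma evl_Cons: "evl K (p # l) z = (if fst p then snd p else inv\<^bsub>K\<^esub> (snd p)) \<otimes>\<^bsub>K\<^esub> evl K l z"
  by (simp add: evl_def)
lemma evl_Nil: "evl K [] z = z"
  by (simp add: evl_def)
lemma evl_append: "evl K (l1 @ l2) z = evl K l1 (evl K l2 z)"
  by (simp add: evl_def)

lemma evl_props:
  assumes "group K" "T \<subseteq> carrier K" "l \<in> lists (UNIV \<times> T)"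
  shows "evl K l \<one>\<^bsub>K\<^esub> \<in> carrier K \<and> (\<forall>z \<in> carrier K. evl K l z = evl K l \<one>\<^bsub>K\<^esub> \<otimes>\<^bsub>K\<^esub> z)"
  using assms(3)
proof (induction l rule: list.induct)
  case Nil thus ?case using assms(1) by (simp add: evl_Nil group.is_monoid monoid.l_one)
next
  case (Cons p l)
  have p: "snd p \<in> carrier K" using Cons.prems assms(2) by auto
  define q where "q = (if fst p then snd p else inv\<^bsub>K\<^esub> (snd p))"
  have q: "q \<in> carrier K" using p assms(1) by (simp add: q_def group.inv_closed)
  have IH: "evl K l \<one>\<^bsub>K\<^esub> \<in> carrier K" "\<forall>z \<in> carrier K. evl K l z = evl K l \<one>\<^bsub>K\<^esub> \<otimes>\<^bsub>K\<^esub> z"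
    using Cons by auto
  have "evl K (p # l) \<one>\<^bsub>K\<^esub> = q \<otimes>\<^bsub>K\<^esub> evl K l \<one>\<^bsub>K\<^esub>" by (simp add: evl_Cons q_def)
  moreover have "\<forall>z \<in> carrier K. evl K (p # l) z = q \<otimes>\<^bsub>K\<^esub> (evl K l \<one>\<^bsub>K\<^esub> \<otimes>\<^bsub>K\<^esub> z)"
    using IH(2) by (simp add: evl_Cons q_def)
  ultimately show ?case using q IH(1) assms(1)
    by (simp add: group.is_monoid monoid.m_assoc monoid.m_closed)
qed

lemma countable_generate:
  assumes "group K" "T \<subseteq> carrier K" "countable T"
  shows "countable (generate K T)"
proof -
  have "\<exists>l \<in> lists (UNIV \<times> T). h = evl K l \<one>\<^bsub>K\<^esub>" if "h \<in> generate K T" for h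
    using that
  proof (induction rule: generate.induct)
    case one thus ?case by (intro bexI[of _ "[]"]) (auto simp: evl_Nil)
  next
    case (incl h) thus ?case using assms(1,2)
      by (intro bexI[of _ "[(True,h)]"]) (auto simp: evl_Cons evl_Nil group.is_monoid monoid.r_one)
  next
    case (inv h) thus ?case using assms(1,2)
      by (intro bexI[of _ "[(False,h)]"]) (auto simp: evl_Cons evl_Nil group.is_monoid monoid.r_one group.inv_closed)
  next
    case (eng h1 h2)
    then obtain l1 l2 where l: "l1 \<in> lists (UNIV \<times> T)" "l2 \<in> lists (UNIV \<times> T)"
      "h1 = evl K l1 \<one>\<^bsub>K\<^esub>" "h2 = evl K l2 \<one>\<^bsub>K\<^esub>" by blast
    have "evl K (l1 @ l2) \<one>\<^bsub>K\<^esub> = evl K l1 (evl K l2 \<one>\<^bsub>K\<^esub>)" by (simp add: evl_append)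
    also have "\<dots> = h1 \<otimes>\<^bsub>K\<^esub> h2" using evl_props[OF assms(1,2) l(1)] evl_props[OF assms(1,2) l(2)] l by auto
    finally show ?case using l by (intro bexI[of _ "l1 @ l2"]) auto
  qed
  hence "generate K T \<subseteq> (\<lambda>l. evl K l \<one>\<^bsub>K\<^esub>) ` lists (UNIV \<times> T)" by blast
  moreover have "countable (lists ((UNIV::bool set) \<times> T))" using assms(3) by (intro countable_lists countable_SIGMA) (auto intro: countable_finite)
  ultimately show ?thesis by (metis countable_image countable_subset)
qed



lemma commutator_eq: assumes g: "group K" and xy: "x \<in> carrier K" "y \<in> carrier K"
  shows "commutator K x y = \<one>\<^bsub>K\<^esub> \<longleftrightarrow> x \<otimes>\<^bsub>K\<^esub> y = y \<otimes>\<^bsub>K\<^esub> x"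
proof -
  interpret group K by fact
  have "commutator K x y = inv\<^bsub>K\<^esub> (y \<otimes>\<^bsub>K\<^esub> x) \<otimes>\<^bsub>K\<^esub> (x \<otimes>\<^bsub>K\<^esub> y)"
    unfolding commutator_def using xy by (simp add: inv_mult_group m_assoc)
  also have "\<dots> = \<one>\<^bsub>K\<^esub> \<longleftrightarrow> x \<otimes>\<^bsub>K\<^esub> y = y \<otimes>\<^bsub>K\<^esub> x"
  proof
    assume "inv\<^bsub>K\<^esub> (y \<otimes>\<^bsub>K\<^esub> x) \<otimes>\<^bsub>K\<^esub> (x \<otimes>\<^bsub>K\<^esub> y) = \<one>\<^bsub>K\<^esub>"
    thus "x \<otimes>\<^bsub>K\<^esub> y = y \<otimes>\<^bsub>K\<^esub> x" using xy
      by (metis inv_closed inv_inv m_closed inv_equality)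
  next
    assume "x \<otimes>\<^bsub>K\<^esub> y = y \<otimes>\<^bsub>K\<^esub> x"
    thus "inv\<^bsub>K\<^esub> (y \<otimes>\<^bsub>K\<^esub> x) \<otimes>\<^bsub>K\<^esub> (x \<otimes>\<^bsub>K\<^esub> y) = \<one>\<^bsub>K\<^esub>" using xy by simp
  qed
  finally show ?thesis .
qed



lemma bridge:
  fixes G :: "'g monoid" and K' :: "('k, 'z) monoid_scheme"
  assumes P: "presents_Gmn G a b m n" and K': "group K'" "a' \<in> carrier K'" "b' \<in> carrier K'"
    "commutator K' (a' [^]\<^bsub>K'\<^esub> m) (b' [^]\<^bsub>K'\<^esub> n) = \<one>\<^bsub>K'\<^esub>"
  shows "\<exists>h \<in> hom G K'. h a = a' \<and> h b = b'"
proof -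
  interpret K': group K' by fact
  define S where "S = generate K' {a', b'}"
  have sub: "subgroup S K'" unfolding S_def using K' by (intro K'.generate_is_subgroup) auto
  have "countable S" unfolding S_def using K' by (intro countable_generate) auto
  then obtain f :: "'k \<Rightarrow> nat" where f: "inj_on f S" unfolding countable_def by blast
  define g where "g = inv_into S f"
  have gf: "g (f s) = s" if "s \<in> S" for s using f that by (simp add: g_def)
  have Sc: "s \<in> carrier K'" if "s \<in> S" for s using sub that subgroup.subset by blast
  have Sm: "s \<otimes>\<^bsub>K'\<^esub> t \<in> S" if "s \<in> S" "t \<in> S" for s t using sub that by (rule subgroup.m_closed)
  have Si: "inv\<^bsub>K'\<^esub> s \<in> S" if "s \<in> S" for s using sub that by (rule subgroup.m_inv_closed)
  have So: "\<one>\<^bsub>K'\<^esub> \<in> S" using sub by (rule subgroup.one_closed)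
  define K :: "nat monoid" where "K = \<lparr>carrier = f ` S, monoid.mult = (\<lambda>x y. f (g x \<otimes>\<^bsub>K'\<^esub> g y)), one = f \<one>\<^bsub>K'\<^esub>\<rparr>"
  have Kc: "carrier K = f ` S" and Ko: "\<one>\<^bsub>K\<^esub> = f \<one>\<^bsub>K'\<^esub>" by (simp_all add: K_def)
  have Kmult: "f s \<otimes>\<^bsub>K\<^esub> f t = f (s \<otimes>\<^bsub>K'\<^esub> t)" if "s \<in> S" "t \<in> S" for s t
    using that by (simp add: K_def gf)
  have grpK: "group K"
  proof (rule groupI)
    show "x \<otimes>\<^bsub>K\<^esub> y \<in> carrier K" if "x \<in> carrier K" "y \<in> carrier K" for x y
      using that Sm Kmult unfolding Kc by auto
    show "\<one>\<^bsub>K\<^esub> \<in> carrier K" using So by (simp add: Kc Ko)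
    show "x \<otimes>\<^bsub>K\<^esub> y \<otimes>\<^bsub>K\<^esub> z = x \<otimes>\<^bsub>K\<^esub> (y \<otimes>\<^bsub>K\<^esub> z)"
      if hx: "x \<in> carrier K" "y \<in> carrier K" "z \<in> carrier K" for x y z
    proof -
      obtain s t u where "s \<in> S" "t \<in> S" "u \<in> S" "x = f s" "y = f t" "z = f u"
        using hx unfolding Kc by blast
      thus ?thesis using Sm Kmult Sc by (simp add: K'.m_assoc)
    qed
    show "\<one>\<^bsub>K\<^esub> \<otimes>\<^bsub>K\<^esub> x = x" if hx: "x \<in> carrier K" for x
    proof -
      obtain s where "s \<in> S" "x = f s" using hx unfolding Kc by blast
      thus ?thesis using So Kmult Sc by (simp add: Ko)
    qed
    show "\<exists>y\<in>carrier K. y \<otimes>\<^bsub>K\<^esub> x = \<one>\<^bsub>K\<^esub>" if hx: "x \<in> carrier K" for x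
    proof -
      obtain s where s: "s \<in> S" "x = f s" using hx unfolding Kc by blast
      have "f (inv\<^bsub>K'\<^esub> s) \<otimes>\<^bsub>K\<^esub> x = \<one>\<^bsub>K\<^esub>" using s Si Kmult Sc by (simp add: Ko)
      moreover have "f (inv\<^bsub>K'\<^esub> s) \<in> carrier K" using s Si by (simp add: Kc)
      ultimately show ?thesis by blast
    qed
  qed
  interpret K: group K by (rule grpK)
  have fc: "f s \<in> carrier K" if "s \<in> S" for s using that by (simp add: Kc)
  have fpow: "f s [^]\<^bsub>K\<^esub> (k::nat) = f (s [^]\<^bsub>K'\<^esub> k)" if "s \<in> S" for s k
  proof (induction k)
    case 0 thus ?case by (simp add: Ko)
  next
    case (Suc k)
    have "s [^]\<^bsub>K'\<^esub> k \<in> S" using K'.subgroup_int_pow_closed[OF sub that, of "int k"] by (simp add: int_pow_int)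
    thus ?case using Suc that by (simp add: Kmult)
  qed
  have finv: "inv\<^bsub>K\<^esub> (f s) = f (inv\<^bsub>K'\<^esub> s)" if "s \<in> S" for s
  proof (rule K.inv_equality)
    show "f (inv\<^bsub>K'\<^esub> s) \<otimes>\<^bsub>K\<^esub> f s = \<one>\<^bsub>K\<^esub>" using that Si Kmult Sc by (simp add: Ko)
    show "f s \<in> carrier K" using that by (rule fc)
    show "f (inv\<^bsub>K'\<^esub> s) \<in> carrier K" using that Si fc by blast
  qed
  have aS: "a' \<in> S" "b' \<in> S" unfolding S_def by (auto intro: generate.incl)
  have pS: "a' [^]\<^bsub>K'\<^esub> m \<in> S" "b' [^]\<^bsub>K'\<^esub> n \<in> S"
    using K'.subgroup_int_pow_closed[OF sub aS(1), of "int m"] K'.subgroup_int_pow_closed[OF sub aS(2), of "int n"]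
    by (simp_all add: int_pow_int)
  define x where "x = a' [^]\<^bsub>K'\<^esub> m"
  define y where "y = b' [^]\<^bsub>K'\<^esub> n"
  have xy: "x \<in> S" "y \<in> S" using pS by (simp_all add: x_def y_def)
  have "commutator K (f x) (f y) = f (commutator K' x y)"
    unfolding commutator_def using xy Si Sm by (simp add: finv Kmult)
  also have "\<dots> = \<one>\<^bsub>K\<^esub>" using K'(4) by (simp add: Ko x_def y_def)
  finally have comm: "commutator K (f a' [^]\<^bsub>K\<^esub> m) (f b' [^]\<^bsub>K\<^esub> n) = \<one>\<^bsub>K\<^esub>"
    using aS by (simp add: fpow x_def y_def)
  from P have "\<forall>(K :: nat monoid) a' b'.
        group K \<and> a' \<in> carrier K \<and> b' \<in> carrier K \<and>
        commutator K (a' [^]\<^bsub>K\<^esub> m) (b' [^]\<^bsub>K\<^esub> n) = \<one>\<^bsub>K\<^esub>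
        \<longrightarrow> (\<exists>h \<in> hom G K. h a = a' \<and> h b = b')" by (simp add: presents_Gmn_def)
  from this[rule_format, of K "f a'" "f b'"] obtain h0 where
    h0: "h0 \<in> hom G K" "h0 a = f a'" "h0 b = f b'" using grpK fc aS comm by blast
  have h0S: "g (h0 x) \<in> S \<and> h0 x = f (g (h0 x))" if hx: "x \<in> carrier G" for x
  proof -
    have "h0 x \<in> f ` S" using hom_in_carrier[OF h0(1) hx] by (simp add: Kc)
    then obtain s where "s \<in> S" "h0 x = f s" by blast
    thus ?thesis using gf by simp
  qed
  have "g \<circ> h0 \<in> hom G K'"
  proof (rule homI)
    show "(g \<circ> h0) x \<in> carrier K'" if "x \<in> carrier G" for x using h0S[OF that] Sc by simp
    show "(g \<circ> h0) (x \<otimes>\<^bsub>G\<^esub> y) = (g \<circ> h0) x \<otimes>\<^bsub>K'\<^esub> (g \<circ> h0) y"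
      if "x \<in> carrier G" "y \<in> carrier G" for x y
    proof -
      have "h0 (x \<otimes>\<^bsub>G\<^esub> y) = h0 x \<otimes>\<^bsub>K\<^esub> h0 y" using h0(1) that by (simp add: hom_mult)
      also have "\<dots> = f (g (h0 x) \<otimes>\<^bsub>K'\<^esub> g (h0 y))" by (simp add: K_def)
      finally have "g (h0 (x \<otimes>\<^bsub>G\<^esub> y)) = g (h0 x) \<otimes>\<^bsub>K'\<^esub> g (h0 y)"
        using h0S that Sm gf by simp
      thus ?thesis by simp
    qed
  qed
  moreover have "(g \<circ> h0) a = a'" "(g \<circ> h0) b = b'" using h0 gf aS by simp_all
  ultimately show ?thesis by blast
qed



lemma pow_from_hom:
  assumes K: "group K" and Fc: "\<And>i. F i \<in> carrier K"
    and Fm: "\<And>i j. F i \<otimes>\<^bsub>K\<^esub> F j = F (i + j)" and F0: "F 0 = \<one>\<^bsub>K\<^esub>"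
  shows "F 1 [^]\<^bsub>K\<^esub> (k::int) = F k"
proof -
  have nat: "F 1 [^]\<^bsub>K\<^esub> (n::nat) = F (int n)" for n
  proof (induction n)
    case 0 show ?case using F0 by simp
  next
    case (Suc n)
    have "F 1 [^]\<^bsub>K\<^esub> Suc n = F 1 [^]\<^bsub>K\<^esub> n \<otimes>\<^bsub>K\<^esub> F 1" by simp
    also have "\<dots> = F (int n + 1)" using Suc Fm by simp
    also have "\<dots> = F (int (Suc n))" by (rule arg_cong[where f=F]) simp
    finally show ?case .
  qed
  show ?thesis
  proof (cases "k < 0")
    case True
    have "F k \<otimes>\<^bsub>K\<^esub> F (- k) = \<one>\<^bsub>K\<^esub>" using Fm[of k "-k"] F0 by simp
    hence "inv\<^bsub>K\<^esub> (F (- k)) = F k"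
      using group.inv_equality[OF K _ Fc Fc] by blast
    have "F 1 [^]\<^bsub>K\<^esub> k = inv\<^bsub>K\<^esub> (F 1 [^]\<^bsub>K\<^esub> nat (-k))" using True int_pow_def2[of K "F 1" k] by simp
    also have "\<dots> = inv\<^bsub>K\<^esub> (F (int (nat (-k))))" by (simp only: nat)
    also have "int (nat (-k)) = -k" using True by simp
    finally show ?thesis using \<open>inv\<^bsub>K\<^esub> (F (- k)) = F k\<close> by simp
  next
    case False
    hence "F 1 [^]\<^bsub>K\<^esub> k = F 1 [^]\<^bsub>K\<^esub> nat k" using pow_nat[of k K "F 1"] by simp
    also have "\<dots> = F (int (nat k))" by (rule nat)
    also have "int (nat k) = k" using False by simp
    finally show ?thesis .
  qed
qed

definition Xr :: "nat \<Rightarrow> syl list set" where "Xr m = {w. red m w}"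
definition Ap :: "nat \<Rightarrow> int \<Rightarrow> syl list \<Rightarrow> syl list" where "Ap m i = restrict (lmulA m i) (Xr m)"
definition Bp :: "nat \<Rightarrow> int \<Rightarrow> syl list \<Rightarrow> syl list" where "Bp m j = restrict (lmulB j) (Xr m)"

lemma BijGroup_mult: "F \<in> Bij S \<Longrightarrow> H \<in> Bij S \<Longrightarrow> F \<otimes>\<^bsub>BijGroup S\<^esub> H = compose S F H"
  by (simp add: BijGroup_def)
lemma BijGroup_apply: "F \<in> Bij S \<Longrightarrow> H \<in> Bij S \<Longrightarrow> v \<in> S \<Longrightarrow> (F \<otimes>\<^bsub>BijGroup S\<^esub> H) v = F (H v)"
  by (simp add: BijGroup_mult compose_def)
lemma BijGroup_one: "\<one>\<^bsub>BijGroup S\<^esub> = (\<lambda>x\<in>S. x)"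
  by (simp add: BijGroup_def)
lemma BijGroup_carrier: "carrier (BijGroup S) = Bij S"
  by (simp add: BijGroup_def)
lemma Bij_maps: "F \<in> Bij S \<Longrightarrow> v \<in> S \<Longrightarrow> F v \<in> S"
  by (auto simp: Bij_def bij_betw_def)

lemma Ap_Bij: assumes "m > 1" shows "Ap m i \<in> Bij (Xr m)"
proof -
  have "bij_betw (Ap m i) (Xr m) (Xr m)"
  proof (rule bij_betw_byWitness[where f'="Ap m (-i)"])
    show "\<forall>a\<in>Xr m. Ap m (- i) (Ap m i a) = a" using assms
      by (auto simp: Ap_def Xr_def red_lmulA lmulA_comp lmulA_0[where k=0, simplified])
    show "\<forall>a\<in>Xr m. Ap m i (Ap m (-i) a) = a" using assms
      by (auto simp: Ap_def Xr_def red_lmulA lmulA_comp lmulA_0[where k=0, simplified])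
    show "Ap m i ` Xr m \<subseteq> Xr m" "Ap m (-i) ` Xr m \<subseteq> Xr m" using assms
      by (auto simp: Ap_def Xr_def red_lmulA)
  qed
  thus ?thesis by (simp add: Bij_def Ap_def)
qed

lemma Bp_Bij: shows "Bp m j \<in> Bij (Xr m)"
proof -
  have "bij_betw (Bp m j) (Xr m) (Xr m)"
  proof (rule bij_betw_byWitness[where f'="Bp m (-j)"])
    show "\<forall>a\<in>Xr m. Bp m (- j) (Bp m j a) = a"
      by (auto simp: Bp_def Xr_def red_lmulB lmulB_comp lmulB_0)
    show "\<forall>a\<in>Xr m. Bp m j (Bp m (-j) a) = a"
      by (auto simp: Bp_def Xr_def red_lmulB lmulB_comp lmulB_0)
    show "Bp m j ` Xr m \<subseteq> Xr m" "Bp m (-j) ` Xr m \<subseteq> Xr m"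
      by (auto simp: Bp_def Xr_def red_lmulB)
  qed
  thus ?thesis by (simp add: Bij_def Bp_def)
qed


lemma Ap_mult: assumes "m > 1" shows "Ap m i \<otimes>\<^bsub>BijGroup (Xr m)\<^esub> Ap m j = Ap m (i + j)"
  unfolding BijGroup_mult[OF Ap_Bij[OF assms] Ap_Bij[OF assms]]
  using assms by (auto simp: compose_def Ap_def Xr_def red_lmulA lmulA_comp)

lemma Bp_mult: "Bp m i \<otimes>\<^bsub>BijGroup (Xr m)\<^esub> Bp m j = Bp m (i + j)"
  unfolding BijGroup_mult[OF Bp_Bij Bp_Bij]
  by (auto simp: compose_def Bp_def Xr_def red_lmulB lmulB_comp)

lemma Ap_0: assumes "m > 1" shows "Ap m (int m * k) = \<one>\<^bsub>BijGroup (Xr m)\<^esub>"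
  using assms by (auto simp: BijGroup_one Ap_def Xr_def lmulA_0)

lemma Bp_0: "Bp m 0 = \<one>\<^bsub>BijGroup (Xr m)\<^esub>"
  by (auto simp: BijGroup_one Bp_def Xr_def lmulB_0)

lemma Ap_pow: assumes "m > 1" shows "Ap m 1 [^]\<^bsub>BijGroup (Xr m)\<^esub> (k::int) = Ap m k"
  using Ap_0[OF assms, of 0]
  by (intro pow_from_hom) (simp_all add: group_BijGroup BijGroup_carrier Ap_Bij[OF assms] Ap_mult[OF assms])

lemma Bp_pow: "Bp m 1 [^]\<^bsub>BijGroup (Xr m)\<^esub> (k::int) = Bp m k"
  using Bp_0
  by (intro pow_from_hom) (simp_all add: group_BijGroup BijGroup_carrier Bp_Bij Bp_mult)



definition evG :: "'g monoid \<Rightarrow> 'g \<Rightarrow> 'g \<Rightarrow> syl list \<Rightarrow> 'g" where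
  "evG G a d w = foldr (\<lambda>s acc. (if fst s then a else d) [^]\<^bsub>G\<^esub> (snd s) \<otimes>\<^bsub>G\<^esub> acc) w \<one>\<^bsub>G\<^esub>"

lemma evG_Nil: "evG G a d [] = \<one>\<^bsub>G\<^esub>" by (simp add: evG_def)
lemma evG_Cons: "evG G a d (s # w) = (if fst s then a else d) [^]\<^bsub>G\<^esub> (snd s) \<otimes>\<^bsub>G\<^esub> evG G a d w"
  by (simp add: evG_def)

lemma (in group) commute_int_pow1:
  assumes xy: "x \<in> carrier G" "y \<in> carrier G" and c: "x \<otimes> y = y \<otimes> x"
  shows "x [^] (i::int) \<otimes> y = y \<otimes> x [^] i"
proof (cases "i < 0")
  case True
  define z where "z = x [^] nat (-i)"
  have z: "z \<in> carrier G" unfolding z_def using xy by simp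
  have zy: "z \<otimes> y = y \<otimes> z" unfolding z_def using group_commutes_pow[OF c xy] .
  have "inv z \<otimes> y = inv z \<otimes> y \<otimes> (z \<otimes> inv z)" using z xy by simp
  also have "\<dots> = inv z \<otimes> (z \<otimes> y) \<otimes> inv z" using z xy zy by (simp add: m_assoc)
  also have "\<dots> = (inv z \<otimes> z) \<otimes> y \<otimes> inv z" using z xy by (simp only: m_assoc inv_closed m_closed)
  also have "\<dots> = y \<otimes> inv z" using z xy by simp
  finally have "inv z \<otimes> y = y \<otimes> inv z" .
  moreover have "x [^] i = inv z" unfolding z_def using int_pow_neg_int[OF xy(1), of "nat (-i)"] True by simp
  ultimately show ?thesis by simp
next
  case False
  hence e: "x [^] i = x [^] nat i" by (simp add: pow_nat)
  show ?thesis unfolding e using group_commutes_pow[OF c xy] .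
qed

lemma (in group) commute_int_pow:
  assumes xy: "x \<in> carrier G" "y \<in> carrier G" and c: "x \<otimes> y = y \<otimes> x"
  shows "x [^] (i::int) \<otimes> y [^] (j::int) = y [^] j \<otimes> x [^] i"
proof -
  have "y \<otimes> x [^] i = x [^] i \<otimes> y" using commute_int_pow1[OF xy c] by simp
  from commute_int_pow1[OF xy(2) _ this] xy show ?thesis by simp
qed

locale NF = group G for G :: "'g monoid" (structure) +
  fixes a d :: 'g and m :: nat
  assumes ac: "a \<in> carrier G" and dc: "d \<in> carrier G" and m1: "1 < m"
    and cd: "a [^] m \<otimes> d = d \<otimes> a [^] m"
begin

abbreviation ev where "ev \<equiv> evG G a d"

lemma ev_closed[simp]: "ev w \<in> carrier G"
  by (induction w) (auto simp: evG_Nil evG_Cons ac dc)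

lemma cpow: "(a [^] m) [^] (k::int) = a [^] (int m * k)"
proof -
  have "(a [^] m) [^] k = (a [^] (int m)) [^] k" by (simp only: int_pow_int)
  also have "\<dots> = a [^] (int m * k)" using ac by (rule int_pow_pow)
  finally show ?thesis .
qed

lemma ev_mkA: "ev (mkA r u) = a [^] r \<otimes> ev u"
  by (simp add: mkA_def evG_Cons ac)
lemma ev_mkB: "ev (mkB r u) = d [^] r \<otimes> ev u"
  by (simp add: mkB_def evG_Cons dc)

lemma L1: assumes "red m v"
  shows "a [^] (i::int) \<otimes> ev v = (a [^] m) [^] ((leadA v + i) div int m) \<otimes> ev (lmulA m i v)"
proof -
  define x where "x = leadA v + i"
  have "a [^] i \<otimes> ev v = a [^] i \<otimes> (a [^] leadA v \<otimes> ev (restA v))"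
    using restA_eq[OF assms] ev_mkA by metis
  also have "\<dots> = a [^] x \<otimes> ev (restA v)"
    by (simp add: x_def m_assoc[symmetric] ac int_pow_mult[symmetric] add.commute)
  also have "a [^] x = (a [^] m) [^] (x div int m) \<otimes> a [^] (x mod int m)"
  proof -
    have xe: "int m * (x div int m) + x mod int m = x" by simp
    have "(a [^] m) [^] (x div int m) \<otimes> a [^] (x mod int m) = a [^] (int m * (x div int m) + x mod int m)"
      by (simp add: cpow int_pow_mult[OF ac, symmetric])
    thus ?thesis using xe by simp
  qed
  finally show ?thesis
    by (simp add: x_def lmulA_def ev_mkA m_assoc ac)
qed

lemma L2: assumes "red m v"
  shows "d [^] (j::int) \<otimes> ev v = ev (lmulB j v)"
proof -
  have "d [^] j \<otimes> ev v = d [^] j \<otimes> (d [^] leadB v \<otimes> ev (restB v))"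
    using restB_eq[OF assms] ev_mkB by metis
  also have "\<dots> = d [^] (leadB v + j) \<otimes> ev (restB v)"
    by (simp add: m_assoc[symmetric] dc int_pow_mult[symmetric] add.commute)
  finally show ?thesis by (simp add: lmulB_def ev_mkB)
qed

definition S where "S = {x. \<exists>k w. red m w \<and> x = (a [^] m) [^] (k::int) \<otimes> ev w}"

lemma S_one: "\<one> \<in> S"
  unfolding S_def by (rule CollectI, rule exI[of _ 0], rule exI[of _ "[]"]) (simp add: evG_Nil ac)

lemma S_a: assumes "z \<in> S" shows "a [^] (i::int) \<otimes> z \<in> S"
proof -
  obtain k :: int and w where kw: "red m w" "z = (a [^] m) [^] k \<otimes> ev w" using assms unfolding S_def by blast
  have comm: "a [^] i \<otimes> (a [^] m) [^] k = (a [^] m) [^] k \<otimes> a [^] i"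
    by (simp add: cpow int_pow_mult[OF ac, symmetric] add.commute)
  have "a [^] i \<otimes> z = (a [^] m) [^] k \<otimes> (a [^] i \<otimes> ev w)"
    using kw comm ac by (simp add: m_assoc[symmetric])
  also have "\<dots> = (a [^] m) [^] (k + (leadA w + i) div int m) \<otimes> ev (lmulA m i w)"
    using L1[OF kw(1)] ac by (simp add: int_pow_mult m_assoc)
  finally show ?thesis using red_lmulA[OF kw(1) m1] unfolding S_def by blast
qed

lemma S_d: assumes "z \<in> S" shows "d [^] (j::int) \<otimes> z \<in> S"
proof -
  obtain k :: int and w where kw: "red m w" "z = (a [^] m) [^] k \<otimes> ev w" using assms unfolding S_def by blast
  have comm: "d [^] j \<otimes> (a [^] m) [^] k = (a [^] m) [^] k \<otimes> d [^] j"
    using commute_int_pow[of d "a [^] m" j k] ac dc cd by simp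
  have "d [^] j \<otimes> z = (a [^] m) [^] k \<otimes> (d [^] j \<otimes> ev w)"
    using kw comm ac dc by (simp add: m_assoc[symmetric])
  also have "\<dots> = (a [^] m) [^] k \<otimes> ev (lmulB j w)"
    using L2[OF kw(1)] by simp
  finally show ?thesis using red_lmulB[OF kw(1)] unfolding S_def by blast
qed

lemma S_c: assumes "z \<in> S" shows "(a [^] m) [^] (j::int) \<otimes> z \<in> S"
proof -
  obtain k :: int and w where kw: "red m w" "z = (a [^] m) [^] k \<otimes> ev w" using assms unfolding S_def by blast
  have "(a [^] m) [^] j \<otimes> z = (a [^] m) [^] (j + k) \<otimes> ev w"
    using kw ac by (simp add: m_assoc[symmetric] int_pow_mult)
  thus ?thesis using kw unfolding S_def by blast
qed

lemma S_carrier: "S \<subseteq> carrier G"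
  unfolding S_def using ac by auto

lemma H_S: assumes "h \<in> generate G {a [^] m, d}" shows "\<forall>z \<in> S. h \<otimes> z \<in> S"
  using assms
proof (induction rule: generate.induct)
  case one thus ?case using S_carrier by auto
next
  case (incl h)
  thus ?case using S_c[of _ 1] S_d[of _ 1] ac dc by auto
next
  case (inv h)
  thus ?case using S_c[of _ "-1"] S_d[of _ "-1"] ac dc by (auto simp: int_pow_neg)
next
  case (eng h1 h2)
  have "h1 \<in> carrier G" "h2 \<in> carrier G"
    using eng.hyps generate_incl[of "{a [^] m, d}"] ac dc by auto
  thus ?case using eng.IH S_carrier by (auto simp: m_assoc)
qed

lemma H_sub: "generate G {a [^] m, d} \<subseteq> carrier G"
  using generate_incl[of "{a [^] m, d}"] ac dc by auto

lemma A_S: assumes "g \<in> generate G (insert a (generate G {a [^] m, d}))" shows "\<forall>z \<in> S. g \<otimes> z \<in> S"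
  using assms
proof (induction rule: generate.induct)
  case one thus ?case using S_carrier by auto
next
  case (incl h)
  thus ?case using S_a[of _ 1] H_S ac by auto
next
  case (inv h)
  moreover have "h \<in> generate G {a [^] m, d} \<Longrightarrow> inv h \<in> generate G {a [^] m, d}"
    using generate_m_inv_closed[of "{a [^] m, d}"] ac dc by auto
  ultimately show ?case using S_a[of _ "-1"] H_S ac by (auto simp: int_pow_neg)
next
  case (eng h1 h2)
  have "h1 \<in> carrier G" "h2 \<in> carrier G"
    using eng.hyps generate_incl[of "insert a (generate G {a [^] m, d})"] H_sub ac by auto
  thus ?case using eng.IH S_carrier by (auto simp: m_assoc)
qed

lemma A_nf: assumes "y \<in> generate G (insert a (generate G {a [^] m, d}))"
  shows "\<exists>k w. red m w \<and> y = (a [^] m) [^] (k::int) \<otimes> ev w"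
proof -
  have "y \<in> carrier G"
    using assms generate_incl[of "insert a (generate G {a [^] m, d})"] H_sub ac by auto
  hence "y = y \<otimes> \<one>" by simp
  also have "\<dots> \<in> S" using A_S[OF assms] S_one by blast
  finally show ?thesis unfolding S_def by blast
qed

end



definition scaleB :: "nat \<Rightarrow> syl list \<Rightarrow> syl list" where
  "scaleB n w = map (\<lambda>s. if fst s then s else (False, int n * snd s)) w"

lemma scaleB_Nil[simp]: "scaleB n [] = []" by (simp add: scaleB_def)
lemma scaleB_Cons: "scaleB n (s # w) = (if fst s then s else (False, int n * snd s)) # scaleB n w"
  by (simp add: scaleB_def)

lemma red_scaleB: "red m w \<Longrightarrow> n > 0 \<Longrightarrow> red m (scaleB n w)"
proof (induction w)
  case Nil thus ?case by simp
next
  case (Cons s w)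
  obtain t e where s: "s = (t,e)" by (cases s)
  have "scaleB n w = [] \<or> fst (hd (scaleB n w)) = fst (hd w)" by (cases w) (auto simp: scaleB_Cons)
  thus ?case using Cons s by (cases t) (auto simp: red_Cons scaleB_Cons)
qed

lemma hasT_scaleB: "hasT w \<Longrightarrow> hasT (scaleB n w)"
  unfolding hasT_def scaleB_def by force

lemma noT_cases: "red m w \<Longrightarrow> \<not> hasT w \<Longrightarrow> w = [] \<or> (\<exists>j. w = [(False, j)])"
proof (cases w)
  case (Cons s L)
  assume r: "red m w" and h: "\<not> hasT w"
  obtain t e where s: "s = (t,e)" by (cases s)
  have t: "\<not> t" using h Cons s by (auto simp: hasT_def)
  have "L = []"
  proof (rule ccontr)
    assume "L \<noteq> []"
    then obtain s' L' where "L = s' # L'" by (cases L) auto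
    thus False using r h Cons s t by (cases s') (auto simp: red_Cons hasT_def)
  qed
  thus ?thesis using Cons s t by auto
qed simp



lemma presents_facts:
  assumes P: "presents_Gmn G a b m n"
  shows "group G" "a \<in> carrier G" "b \<in> carrier G"
    "a [^]\<^bsub>G\<^esub> m \<otimes>\<^bsub>G\<^esub> b [^]\<^bsub>G\<^esub> n = b [^]\<^bsub>G\<^esub> n \<otimes>\<^bsub>G\<^esub> a [^]\<^bsub>G\<^esub> m"
proof -
  show g: "group G" and a: "a \<in> carrier G" and b: "b \<in> carrier G" using P by (auto simp: presents_Gmn_def)
  have "commutator G (a [^]\<^bsub>G\<^esub> m) (b [^]\<^bsub>G\<^esub> n) = \<one>\<^bsub>G\<^esub>" using P by (simp add: presents_Gmn_def)
  thus "a [^]\<^bsub>G\<^esub> m \<otimes>\<^bsub>G\<^esub> b [^]\<^bsub>G\<^esub> n = b [^]\<^bsub>G\<^esub> n \<otimes>\<^bsub>G\<^esub> a [^]\<^bsub>G\<^esub> m"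
    using commutator_eq[OF g] a b g by (simp add: group.is_monoid monoid.nat_pow_closed)
qed

lemma phi_part:
  fixes G :: "'g monoid"
  assumes m1: "m > 1" and P: "presents_Gmn G a b m n"
    and y: "y \<in> carrier G"
    and eq: "(a [^]\<^bsub>G\<^esub> m) [^]\<^bsub>G\<^esub> (\<alpha>::int) \<otimes>\<^bsub>G\<^esub> (b [^]\<^bsub>G\<^esub> n) [^]\<^bsub>G\<^esub> (\<beta>::int) \<otimes>\<^bsub>G\<^esub> y \<otimes>\<^bsub>G\<^esub> (a [^]\<^bsub>G\<^esub> m) [^]\<^bsub>G\<^esub> (\<gamma>::int) \<otimes>\<^bsub>G\<^esub> (b [^]\<^bsub>G\<^esub> n) [^]\<^bsub>G\<^esub> (\<delta>::int)
      = (a [^]\<^bsub>G\<^esub> m) [^]\<^bsub>G\<^esub> (\<alpha>'::int) \<otimes>\<^bsub>G\<^esub> (b [^]\<^bsub>G\<^esub> n) [^]\<^bsub>G\<^esub> (\<beta>'::int) \<otimes>\<^bsub>G\<^esub> y \<otimes>\<^bsub>G\<^esub> (a [^]\<^bsub>G\<^esub> m) [^]\<^bsub>G\<^esub> (\<gamma>'::int) \<otimes>\<^bsub>G\<^esub> (b [^]\<^bsub>G\<^esub> n) [^]\<^bsub>G\<^esub> (\<delta>'::int)"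
  shows "\<alpha> + \<gamma> = \<alpha>' + \<gamma>'"
proof -
  note pf = presents_facts[OF P]
  interpret G: group G by (rule pf(1))
  have "commutator integer_group ((1::int) [^]\<^bsub>integer_group\<^esub> m) ((0::int) [^]\<^bsub>integer_group\<^esub> n) = \<one>\<^bsub>integer_group\<^esub>"
    by (simp add: commutator_def)
  then obtain \<phi> where phi: "\<phi> \<in> hom G integer_group" "\<phi> a = 1" "\<phi> b = 0"
    using bridge[OF P group_integer_group, of 1 0] by auto
  have ca: "a [^]\<^bsub>G\<^esub> m \<in> carrier G" "b [^]\<^bsub>G\<^esub> n \<in> carrier G" using pf by auto
  have pc: "\<phi> ((a [^]\<^bsub>G\<^esub> m) [^]\<^bsub>G\<^esub> (k::int)) = k * int m" for k
    using phi pf(1,2) ca by (simp add: hom_int_pow hom_nat_pow)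
  have pd: "\<phi> ((b [^]\<^bsub>G\<^esub> n) [^]\<^bsub>G\<^esub> (k::int)) = 0" for k
    using phi pf(1,3) ca by (simp add: hom_int_pow hom_nat_pow)
  have ev: "\<phi> ((a [^]\<^bsub>G\<^esub> m) [^]\<^bsub>G\<^esub> (p::int) \<otimes>\<^bsub>G\<^esub> (b [^]\<^bsub>G\<^esub> n) [^]\<^bsub>G\<^esub> (q::int) \<otimes>\<^bsub>G\<^esub> y \<otimes>\<^bsub>G\<^esub> (a [^]\<^bsub>G\<^esub> m) [^]\<^bsub>G\<^esub> (r::int) \<otimes>\<^bsub>G\<^esub> (b [^]\<^bsub>G\<^esub> n) [^]\<^bsub>G\<^esub> (s::int))
     = p * int m + \<phi> y + r * int m" for p q r s
    using phi(1) ca y by (simp add: hom_mult pc pd)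
  from arg_cong[OF eq, of \<phi>] have "\<alpha> * int m + \<gamma> * int m = \<alpha>' * int m + \<gamma>' * int m"
    unfolding ev by simp
  hence "(\<alpha> + \<gamma>) * int m = (\<alpha>' + \<gamma>') * int m" by (simp add: algebra_simps)
  thus ?thesis using m1 by simp
qed



lemma chi_part:
  fixes G :: "'g monoid"
  assumes m1: "m > 1" and n1: "n > 0" and P: "presents_Gmn G a b m n"
    and yA: "y \<in> generate G (insert a (generate G {a [^]\<^bsub>G\<^esub> m, b [^]\<^bsub>G\<^esub> n}))"
    and yH: "y \<notin> generate G {a [^]\<^bsub>G\<^esub> m, b [^]\<^bsub>G\<^esub> n}"
    and eq: "(a [^]\<^bsub>G\<^esub> m) [^]\<^bsub>G\<^esub> (\<alpha>::int) \<otimes>\<^bsub>G\<^esub> (b [^]\<^bsub>G\<^esub> n) [^]\<^bsub>G\<^esub> (\<beta>::int) \<otimes>\<^bsub>G\<^esub> y \<otimes>\<^bsub>G\<^esub> (a [^]\<^bsub>G\<^esub> m) [^]\<^bsub>G\<^esub> (\<gamma>::int) \<otimes>\<^bsub>G\<^esub> (b [^]\<^bsub>G\<^esub> n) [^]\<^bsub>G\<^esub> (\<delta>::int)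
      = (a [^]\<^bsub>G\<^esub> m) [^]\<^bsub>G\<^esub> (\<alpha>'::int) \<otimes>\<^bsub>G\<^esub> (b [^]\<^bsub>G\<^esub> n) [^]\<^bsub>G\<^esub> (\<beta>'::int) \<otimes>\<^bsub>G\<^esub> y \<otimes>\<^bsub>G\<^esub> (a [^]\<^bsub>G\<^esub> m) [^]\<^bsub>G\<^esub> (\<gamma>'::int) \<otimes>\<^bsub>G\<^esub> (b [^]\<^bsub>G\<^esub> n) [^]\<^bsub>G\<^esub> (\<delta>'::int)"
  shows "\<beta> = \<beta>' \<and> \<delta> = \<delta>'"
proof -
  note pf = presents_facts[OF P]
  interpret G: group G by (rule pf(1))
  define Q where "Q = BijGroup (Xr m)"
  have gQ: "group Q" unfolding Q_def by (rule group_BijGroup)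
  interpret Q: group Q by (rule gQ)
  have Qc: "carrier Q = Bij (Xr m)" unfolding Q_def by (rule BijGroup_carrier)
  have Ac: "Ap m i \<in> carrier Q" for i using Ap_Bij[OF m1] Qc by simp
  have Bc: "Bp m i \<in> carrier Q" for i using Bp_Bij Qc by simp
  have Apow: "Ap m 1 [^]\<^bsub>Q\<^esub> (k::int) = Ap m k" for k unfolding Q_def by (rule Ap_pow[OF m1])
  have Bpow: "Bp m 1 [^]\<^bsub>Q\<^esub> (k::int) = Bp m k" for k unfolding Q_def by (rule Bp_pow)
  have Am: "Ap m 1 [^]\<^bsub>Q\<^esub> m = \<one>\<^bsub>Q\<^esub>"
  proof -
    have "Ap m 1 [^]\<^bsub>Q\<^esub> m = Ap m 1 [^]\<^bsub>Q\<^esub> (int m)" by (simp only: int_pow_int)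
    also have "\<dots> = Ap m (int m * 1)" using Apow by simp
    also have "\<dots> = \<one>\<^bsub>Q\<^esub>" unfolding Q_def by (rule Ap_0[OF m1])
    finally show ?thesis .
  qed
  have Bn: "Bp m 1 [^]\<^bsub>Q\<^esub> n = Bp m (int n)"
  proof -
    have "Bp m 1 [^]\<^bsub>Q\<^esub> n = Bp m 1 [^]\<^bsub>Q\<^esub> (int n)" by (simp only: int_pow_int)
    also have "\<dots> = Bp m (int n)" using Bpow by simp
    finally show ?thesis .
  qed
  have "commutator Q (Ap m 1 [^]\<^bsub>Q\<^esub> m) (Bp m 1 [^]\<^bsub>Q\<^esub> n) = \<one>\<^bsub>Q\<^esub>"
    unfolding Am Bn using commutator_eq[OF gQ Q.one_closed Bc] Bc by simp
  then obtain \<chi> where chi: "\<chi> \<in> hom G Q" "\<chi> a = Ap m 1" "\<chi> b = Bp m 1"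
    using bridge[OF P gQ Ac Bc] by blast
  define c where "c = a [^]\<^bsub>G\<^esub> m"
  define d where "d = b [^]\<^bsub>G\<^esub> n"
  have cc: "c \<in> carrier G" and dc: "d \<in> carrier G" unfolding c_def d_def using pf by auto
  interpret NF G a d m
    using pf m1 dc by unfold_locales (simp_all add: d_def)
  have chic: "\<chi> c = \<one>\<^bsub>Q\<^esub>" unfolding c_def using chi pf gQ Am by (simp add: hom_nat_pow)
  have chid: "\<chi> d = Bp m (int n)" unfolding d_def using chi pf gQ Bn by (simp add: hom_nat_pow)
  have chick: "\<chi> (c [^]\<^bsub>G\<^esub> (k::int)) = \<one>\<^bsub>Q\<^esub>" for k
    using chi pf gQ cc chic by (simp add: hom_int_pow)
  have chidk: "\<chi> (d [^]\<^bsub>G\<^esub> (k::int)) = Bp m (int n * k)" for k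
  proof -
    have "\<chi> (d [^]\<^bsub>G\<^esub> k) = Bp m (int n) [^]\<^bsub>Q\<^esub> k" using chi pf gQ dc chid by (simp add: hom_int_pow)
    also have "\<dots> = (Bp m 1 [^]\<^bsub>Q\<^esub> (int n)) [^]\<^bsub>Q\<^esub> k" using Bpow by simp
    also have "\<dots> = Bp m 1 [^]\<^bsub>Q\<^esub> (int n * k)" using Bc by (simp add: Q.int_pow_pow)
    also have "\<dots> = Bp m (int n * k)" using Bpow by simp
    finally show ?thesis .
  qed
  have chiak: "\<chi> (a [^]\<^bsub>G\<^esub> (k::int)) = Ap m k" for k
    using chi pf gQ Apow by (simp add: hom_int_pow)
  have chimult: "\<chi> (x \<otimes>\<^bsub>G\<^esub> z) = \<chi> x \<otimes>\<^bsub>Q\<^esub> \<chi> z" if "x \<in> carrier G" "z \<in> carrier G" for x z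
    using chi(1) that by (simp add: hom_mult)
  have chiC: "\<chi> x \<in> Bij (Xr m)" if "x \<in> carrier G" for x
    using hom_in_carrier[OF chi(1) that] Qc by simp
  have apQ: "(F \<otimes>\<^bsub>Q\<^esub> H) v = F (H v)" if "F \<in> Bij (Xr m)" "H \<in> Bij (Xr m)" "v \<in> Xr m" for F H v
    unfolding Q_def using that by (rule BijGroup_apply)
  have chiev: "\<chi> (ev w) v = foldr (act m) (scaleB n w) v" if "v \<in> Xr m" for w v
  proof (induction w)
    case Nil
    have "\<chi> (ev []) = \<one>\<^bsub>Q\<^esub>" using chi(1) pf gQ by (simp add: evG_Nil hom_one)
    thus ?case using that by (simp add: Q_def BijGroup_one)
  next
    case (Cons s w)
    obtain t e where s: "s = (t, e)" by (cases s)
    have evc: "ev w \<in> carrier G" by simp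
    have u: "\<chi> (ev w) v \<in> Xr m" using chiC[OF evc] that by (rule Bij_maps)
    show ?case
    proof (cases t)
      case True
      have "\<chi> (ev (s # w)) v = (Ap m e \<otimes>\<^bsub>Q\<^esub> \<chi> (ev w)) v"
        using s True ac evc by (simp add: evG_Cons chimult chiak)
      also have "\<dots> = Ap m e (\<chi> (ev w) v)" using Ap_Bij[OF m1] chiC[OF evc] that by (rule apQ)
      also have "\<dots> = lmulA m e (\<chi> (ev w) v)" using u by (simp add: Ap_def)
      finally show ?thesis using Cons s True by (simp add: scaleB_Cons act_def)
    next
      case False
      have "\<chi> (ev (s # w)) v = (Bp m (int n * e) \<otimes>\<^bsub>Q\<^esub> \<chi> (ev w)) v"
        using s False dc evc by (simp add: evG_Cons chimult chidk)
      also have "\<dots> = Bp m (int n * e) (\<chi> (ev w) v)" using Bp_Bij chiC[OF evc] that by (rule apQ)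
      also have "\<dots> = lmulB (int n * e) (\<chi> (ev w) v)" using u by (simp add: Bp_def)
      finally show ?thesis using Cons s False by (simp add: scaleB_Cons act_def)
    qed
  qed
  obtain k :: int and w where kw: "red m w" "y = c [^]\<^bsub>G\<^esub> k \<otimes>\<^bsub>G\<^esub> ev w"
    using A_nf yA unfolding c_def d_def by blast
  have yc: "y \<in> carrier G" using kw cc by simp
  have hT: "hasT w"
  proof (rule ccontr)
    assume nh: "\<not> hasT w"
    define H where "H = generate G {c, d}"
    have sH: "subgroup H G" unfolding H_def using cc dc by (intro G.generate_is_subgroup) auto
    have cH: "c [^]\<^bsub>G\<^esub> k \<in> H" using G.subgroup_int_pow_closed[OF sH, of c k]
      unfolding H_def by (auto intro: generate.incl)
    have "ev w \<in> H"
    proof (cases "w = []")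
      case True thus ?thesis using sH by (simp add: evG_Nil subgroup.one_closed)
    next
      case False
      then obtain j where "w = [(False, j)]" using noT_cases[OF kw(1) nh] by blast
      moreover have "d [^]\<^bsub>G\<^esub> j \<in> H" using G.subgroup_int_pow_closed[OF sH, of d j]
        unfolding H_def by (auto intro: generate.incl)
      ultimately show ?thesis using dc by (simp add: evG_Cons evG_Nil)
    qed
    hence "y \<in> H" using kw cH sH by (simp add: subgroup.m_closed)
    thus False using yH unfolding H_def c_def d_def by simp
  qed
  define w' where "w' = scaleB n w"
  have rw': "red m w'" unfolding w'_def using kw(1) n1 by (rule red_scaleB)
  have hw': "hasT w'" unfolding w'_def using hT by (rule hasT_scaleB)
  have chiy: "\<chi> y = \<chi> (ev w)" using kw cc hom_in_carrier[OF chi(1) ev_closed] by (simp add: chimult chick)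
  have nil: "[] \<in> Xr m" by (simp add: Xr_def)
  have val: "\<chi> (c [^]\<^bsub>G\<^esub> p \<otimes>\<^bsub>G\<^esub> d [^]\<^bsub>G\<^esub> q \<otimes>\<^bsub>G\<^esub> y \<otimes>\<^bsub>G\<^esub> c [^]\<^bsub>G\<^esub> r \<otimes>\<^bsub>G\<^esub> d [^]\<^bsub>G\<^esub> s) []
     = lmulB (int n * q) (rmulB (int n * s) w')" for p q r s :: int
  proof -
    have "\<chi> (c [^]\<^bsub>G\<^esub> p \<otimes>\<^bsub>G\<^esub> d [^]\<^bsub>G\<^esub> q \<otimes>\<^bsub>G\<^esub> y \<otimes>\<^bsub>G\<^esub> c [^]\<^bsub>G\<^esub> r \<otimes>\<^bsub>G\<^esub> d [^]\<^bsub>G\<^esub> s)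
      = Bp m (int n * q) \<otimes>\<^bsub>Q\<^esub> \<chi> (ev w) \<otimes>\<^bsub>Q\<^esub> Bp m (int n * s)"
      using cc dc yc Bc hom_in_carrier[OF chi(1) ev_closed]
      by (simp add: chimult chick chidk chiy)
    moreover have "Bp m (int n * s) [] = rmulB (int n * s) []"
      using nil by (simp add: Bp_def lmulB_def mkB_def)
    moreover have "rmulB (int n * s) [] \<in> Xr m"
      by (simp add: Xr_def)
    moreover have "\<chi> (ev w) (rmulB (int n * s) []) = rmulB (int n * s) w'"
    proof -
      have "\<chi> (ev w) (rmulB (int n * s) []) = foldr (act m) (scaleB n w) (rmulB (int n * s) [])"
        by (rule chiev) fact
      also have "\<dots> = rmulB (int n * s) w'" unfolding w'_def
        by (rule foldr_act_rmulB[OF red_scaleB[OF kw(1) n1] m1])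
      finally show ?thesis .
    qed
    moreover have "rmulB (int n * s) w' \<in> Xr m"
      using Bij_maps[OF chiC[OF ev_closed] \<open>rmulB (int n * s) [] \<in> Xr m\<close>] \<open>\<chi> (ev w) (rmulB (int n * s) []) = rmulB (int n * s) w'\<close>
      by metis
    ultimately show ?thesis
      using nil Bp_Bij chiC[OF ev_closed] Q.m_closed[of "Bp m (int n * q)" "\<chi> (ev w)"] Bc Qc
      by (simp add: apQ Bp_def)
  qed
  from arg_cong[OF eq, of "\<lambda>g. \<chi> g []"]
  have "lmulB (int n * \<beta>) (rmulB (int n * \<delta>) w') = lmulB (int n * \<beta>') (rmulB (int n * \<delta>') w')"
    using val unfolding c_def d_def by simp
  from final_words[OF rw' hw' this] n1 show ?thesis by simp
qed



lemma presents_sym: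
  assumes P: "presents_Gmn G a b m n" shows "presents_Gmn G b a n m"
proof -
  note pf = presents_facts[OF P]
  interpret G: group G by (rule pf(1))
  have c1: "commutator G (b [^]\<^bsub>G\<^esub> n) (a [^]\<^bsub>G\<^esub> m) = \<one>\<^bsub>G\<^esub>"
    using commutator_eq[OF pf(1), of "b [^]\<^bsub>G\<^esub> n" "a [^]\<^bsub>G\<^esub> m"] pf by simp
  have gen: "carrier G = generate G {b, a}" using P by (simp add: presents_Gmn_def insert_commute)
  have univ: "\<exists>h \<in> hom G K. h b = a' \<and> h a = b'"
    if K: "group K" "a' \<in> carrier K" "b' \<in> carrier K"
      "commutator K (a' [^]\<^bsub>K\<^esub> n) (b' [^]\<^bsub>K\<^esub> m) = \<one>\<^bsub>K\<^esub>" for K :: "nat monoid" and a' b'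
  proof -
    interpret K: group K by fact
    have "commutator K (b' [^]\<^bsub>K\<^esub> m) (a' [^]\<^bsub>K\<^esub> n) = \<one>\<^bsub>K\<^esub>"
      using commutator_eq[OF K(1), of "b' [^]\<^bsub>K\<^esub> m" "a' [^]\<^bsub>K\<^esub> n"]
        commutator_eq[OF K(1), of "a' [^]\<^bsub>K\<^esub> n" "b' [^]\<^bsub>K\<^esub> m"] K by simp
    with P K show ?thesis unfolding presents_Gmn_def by blast
  qed
  show ?thesis unfolding presents_Gmn_def using pf c1 gen univ by blast
qed

lemma core:
  fixes G :: "'g monoid"
  assumes m1: "m > 1" and n1: "n > 1" and P: "presents_Gmn G a b m n"
    and yA: "y \<in> generate G (insert a (generate G {a [^]\<^bsub>G\<^esub> m, b [^]\<^bsub>G\<^esub> n}))"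
    and yH: "y \<notin> generate G {a [^]\<^bsub>G\<^esub> m, b [^]\<^bsub>G\<^esub> n}"
    and eq: "(a [^]\<^bsub>G\<^esub> m) [^]\<^bsub>G\<^esub> (\<alpha>::int) \<otimes>\<^bsub>G\<^esub> (b [^]\<^bsub>G\<^esub> n) [^]\<^bsub>G\<^esub> (\<beta>::int) \<otimes>\<^bsub>G\<^esub> y \<otimes>\<^bsub>G\<^esub> (a [^]\<^bsub>G\<^esub> m) [^]\<^bsub>G\<^esub> (\<gamma>::int) \<otimes>\<^bsub>G\<^esub> (b [^]\<^bsub>G\<^esub> n) [^]\<^bsub>G\<^esub> (\<delta>::int)
      = (a [^]\<^bsub>G\<^esub> m) [^]\<^bsub>G\<^esub> (\<alpha>'::int) \<otimes>\<^bsub>G\<^esub> (b [^]\<^bsub>G\<^esub> n) [^]\<^bsub>G\<^esub> (\<beta>'::int) \<otimes>\<^bsub>G\<^esub> y \<otimes>\<^bsub>G\<^esub> (a [^]\<^bsub>G\<^esub> m) [^]\<^bsub>G\<^esub> (\<gamma>'::int) \<otimes>\<^bsub>G\<^esub> (b [^]\<^bsub>G\<^esub> n) [^]\<^bsub>G\<^esub> (\<delta>'::int)"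
  shows "\<alpha> + \<gamma> = \<alpha>' + \<gamma>' \<and> \<beta> = \<beta>' \<and> \<delta> = \<delta>'"
proof -
  note pf = presents_facts[OF P]
  interpret G: group G by (rule pf(1))
  have "y \<in> carrier G"
    using yA G.generate_incl[of "insert a (generate G {a [^]\<^bsub>G\<^esub> m, b [^]\<^bsub>G\<^esub> n})"]
      G.generate_incl[of "{a [^]\<^bsub>G\<^esub> m, b [^]\<^bsub>G\<^esub> n}"] pf by auto
  thus ?thesis using phi_part[OF m1 P _ eq] chi_part[OF m1 _ P yA yH eq] n1 by simp
qed

lemma (in group) swap4:
  assumes c: "c \<in> carrier G" and d: "d \<in> carrier G" and y: "y \<in> carrier G"
    and cd: "c \<otimes> d = d \<otimes> c"
  shows "c [^] (p::int) \<otimes> d [^] (q::int) \<otimes> y \<otimes> c [^] (r::int) \<otimes> d [^] (s::int)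
       = d [^] q \<otimes> c [^] p \<otimes> y \<otimes> d [^] s \<otimes> c [^] r"
proof -
  have c1: "c [^] p \<otimes> d [^] q = d [^] q \<otimes> c [^] p" using commute_int_pow[OF c d cd] .
  have c2: "c [^] r \<otimes> d [^] s = d [^] s \<otimes> c [^] r" using commute_int_pow[OF c d cd] .
  have "c [^] p \<otimes> d [^] q \<otimes> y \<otimes> c [^] r \<otimes> d [^] s = (c [^] p \<otimes> d [^] q) \<otimes> y \<otimes> (c [^] r \<otimes> d [^] s)"
    using c d y by (simp add: m_assoc)
  also have "\<dots> = (d [^] q \<otimes> c [^] p) \<otimes> y \<otimes> (d [^] s \<otimes> c [^] r)" by (simp only: c1 c2)
  also have "\<dots> = d [^] q \<otimes> c [^] p \<otimes> y \<otimes> d [^] s \<otimes> c [^] r"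
    using c d y by (simp add: m_assoc)
  finally show ?thesis .
qed

theorem lemma1:
  fixes G :: "'g monoid" and a b :: 'g and m n :: nat
  assumes "m > 1" and "n > 1" and "presents_Gmn G a b m n"
  defines "c \<equiv> a [^]\<^bsub>G\<^esub> m"
      and "d \<equiv> b [^]\<^bsub>G\<^esub> n"
  defines "H \<equiv> generate G {c, d}"
  defines "A \<equiv> generate G (insert a H)"
      and "B \<equiv> generate G (insert b H)"
  shows "(\<forall>x y (\<alpha>::int) (\<beta>::int) (\<gamma>::int) (\<delta>::int) (\<alpha>'::int) (\<beta>'::int) (\<gamma>'::int) (\<delta>'::int).
            x \<in> A \<and> y \<in> A \<and> x \<notin> H \<and> y \<notin> H \<and>
            x = c [^]\<^bsub>G\<^esub> \<alpha> \<otimes>\<^bsub>G\<^esub> d [^]\<^bsub>G\<^esub> \<beta> \<otimes>\<^bsub>G\<^esub> y \<otimes>\<^bsub>G\<^esub> c [^]\<^bsub>G\<^esub> \<gamma> \<otimes>\<^bsub>G\<^esub> d [^]\<^bsub>G\<^esub> \<delta> \<and>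
            x = c [^]\<^bsub>G\<^esub> \<alpha>' \<otimes>\<^bsub>G\<^esub> d [^]\<^bsub>G\<^esub> \<beta>' \<otimes>\<^bsub>G\<^esub> y \<otimes>\<^bsub>G\<^esub> c [^]\<^bsub>G\<^esub> \<gamma>' \<otimes>\<^bsub>G\<^esub> d [^]\<^bsub>G\<^esub> \<delta>'
            \<longrightarrow> \<alpha> + \<gamma> = \<alpha>' + \<gamma>' \<and> \<beta> = \<beta>' \<and> \<delta> = \<delta>')
       \<and> (\<forall>x y (\<alpha>::int) (\<beta>::int) (\<gamma>::int) (\<delta>::int) (\<alpha>'::int) (\<beta>'::int) (\<gamma>'::int) (\<delta>'::int).
            x \<in> B \<and> y \<in> B \<and> x \<notin> H \<and> y \<notin> H \<and>
            x = c [^]\<^bsub>G\<^esub> \<alpha> \<otimes>\<^bsub>G\<^esub> d [^]\<^bsub>G\<^esub> \<beta> \<otimes>\<^bsub>G\<^esub> y \<otimes>\<^bsub>G\<^esub> c [^]\<^bsub>G\<^esub> \<gamma> \<otimes>\<^bsub>G\<^esub> d [^]\<^bsub>G\<^esub> \<delta> \<and>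
            x = c [^]\<^bsub>G\<^esub> \<alpha>' \<otimes>\<^bsub>G\<^esub> d [^]\<^bsub>G\<^esub> \<beta>' \<otimes>\<^bsub>G\<^esub> y \<otimes>\<^bsub>G\<^esub> c [^]\<^bsub>G\<^esub> \<gamma>' \<otimes>\<^bsub>G\<^esub> d [^]\<^bsub>G\<^esub> \<delta>'
            \<longrightarrow> \<beta> + \<delta> = \<beta>' + \<delta>' \<and> \<alpha> = \<alpha>' \<and> \<gamma> = \<gamma>')"
proof (rule conjI; intro allI impI)
  note pf = presents_facts[OF assms(3)]
  interpret G: group G by (rule pf(1))
  have cc: "c \<in> carrier G" and dc: "d \<in> carrier G" unfolding c_def d_def using pf by auto
  have cd: "c \<otimes>\<^bsub>G\<^esub> d = d \<otimes>\<^bsub>G\<^esub> c" unfolding c_def d_def using pf(4) .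
  {
    fix x y and \<alpha> \<beta> \<gamma> \<delta> \<alpha>' \<beta>' \<gamma>' \<delta>' :: int
    assume h: "x \<in> A \<and> y \<in> A \<and> x \<notin> H \<and> y \<notin> H \<and>
            x = c [^]\<^bsub>G\<^esub> \<alpha> \<otimes>\<^bsub>G\<^esub> d [^]\<^bsub>G\<^esub> \<beta> \<otimes>\<^bsub>G\<^esub> y \<otimes>\<^bsub>G\<^esub> c [^]\<^bsub>G\<^esub> \<gamma> \<otimes>\<^bsub>G\<^esub> d [^]\<^bsub>G\<^esub> \<delta> \<and>
            x = c [^]\<^bsub>G\<^esub> \<alpha>' \<otimes>\<^bsub>G\<^esub> d [^]\<^bsub>G\<^esub> \<beta>' \<otimes>\<^bsub>G\<^esub> y \<otimes>\<^bsub>G\<^esub> c [^]\<^bsub>G\<^esub> \<gamma>' \<otimes>\<^bsub>G\<^esub> d [^]\<^bsub>G\<^esub> \<delta>'"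
    show "\<alpha> + \<gamma> = \<alpha>' + \<gamma>' \<and> \<beta> = \<beta>' \<and> \<delta> = \<delta>'"
      using core[OF assms(1,2,3), of y \<alpha> \<beta> \<gamma> \<delta> \<alpha>' \<beta>' \<gamma>' \<delta>'] h
      unfolding A_def H_def c_def d_def by metis
  }
  {
    fix x y and \<alpha> \<beta> \<gamma> \<delta> \<alpha>' \<beta>' \<gamma>' \<delta>' :: int
    assume h: "x \<in> B \<and> y \<in> B \<and> x \<notin> H \<and> y \<notin> H \<and>
            x = c [^]\<^bsub>G\<^esub> \<alpha> \<otimes>\<^bsub>G\<^esub> d [^]\<^bsub>G\<^esub> \<beta> \<otimes>\<^bsub>G\<^esub> y \<otimes>\<^bsub>G\<^esub> c [^]\<^bsub>G\<^esub> \<gamma> \<otimes>\<^bsub>G\<^esub> d [^]\<^bsub>G\<^esub> \<delta> \<and>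
            x = c [^]\<^bsub>G\<^esub> \<alpha>' \<otimes>\<^bsub>G\<^esub> d [^]\<^bsub>G\<^esub> \<beta>' \<otimes>\<^bsub>G\<^esub> y \<otimes>\<^bsub>G\<^esub> c [^]\<^bsub>G\<^esub> \<gamma>' \<otimes>\<^bsub>G\<^esub> d [^]\<^bsub>G\<^esub> \<delta>'"
    have HH: "H = generate G {d, c}" unfolding H_def by (simp add: insert_commute)
    have yB: "y \<in> generate G (insert b (generate G {b [^]\<^bsub>G\<^esub> n, a [^]\<^bsub>G\<^esub> m}))"
      using h HH unfolding B_def c_def d_def by simp
    have yH: "y \<notin> generate G {b [^]\<^bsub>G\<^esub> n, a [^]\<^bsub>G\<^esub> m}"
      using h HH unfolding c_def d_def by simp
    have yc: "y \<in> carrier G"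
      using yB G.generate_incl[of "insert b (generate G {b [^]\<^bsub>G\<^esub> n, a [^]\<^bsub>G\<^esub> m})"]
        G.generate_incl[of "{b [^]\<^bsub>G\<^esub> n, a [^]\<^bsub>G\<^esub> m}"] pf by auto
    have "d [^]\<^bsub>G\<^esub> \<beta> \<otimes>\<^bsub>G\<^esub> c [^]\<^bsub>G\<^esub> \<alpha> \<otimes>\<^bsub>G\<^esub> y \<otimes>\<^bsub>G\<^esub> d [^]\<^bsub>G\<^esub> \<delta> \<otimes>\<^bsub>G\<^esub> c [^]\<^bsub>G\<^esub> \<gamma>
        = d [^]\<^bsub>G\<^esub> \<beta>' \<otimes>\<^bsub>G\<^esub> c [^]\<^bsub>G\<^esub> \<alpha>' \<otimes>\<^bsub>G\<^esub> y \<otimes>\<^bsub>G\<^esub> d [^]\<^bsub>G\<^esub> \<delta>' \<otimes>\<^bsub>G\<^esub> c [^]\<^bsub>G\<^esub> \<gamma>'"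
      using h G.swap4[OF cc dc yc cd] by metis
    hence "\<beta> + \<delta> = \<beta>' + \<delta>' \<and> \<alpha> = \<alpha>' \<and> \<gamma> = \<gamma>'"
      using core[OF assms(2,1) presents_sym[OF assms(3)] yB yH] unfolding c_def d_def by blast
    thus "\<beta> + \<delta> = \<beta>' + \<delta>' \<and> \<alpha> = \<alpha>' \<and> \<gamma> = \<gamma>'" .
  }
qed


end
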